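(* Let $\mathcal{L}$ be a Prob-solvable loop with guard polynomial $G$, and let $E_i:=\mathbb{E}(-G_{i+1}+G_i\mid\mathcal{F}_i)$. Suppose: (i) $u$ is an upper bounding function for $E$ and there exist $\kappa>0$ and $i_1$ with $u(i)\le-\kappa$ for all $i\ge i_1$; (ii) $\mathbb{P}(\mathit{Guard}_i)>0$ for every $i\in\mathbb{N}$; (iii) for every branch $B$ of $-G$ there is an absolute bounding function $c_B$ for the expression $B+G$, and there are a constant $C$ and $i_2$ with $c_B(i)\le C$ for all branches $B$ and all $i\ge i_2$. Then $M:=-G$ satisfies the conditions of the relaxed Repulsing-AST-rule: there exist $i_0\in\mathbb{N}$, $\epsilon>0$, $c>0$ with $\mathbb{P}(M_{i_0}<0)>0$ and, for all $i\ge i_0$ almost surely, $\neg\mathit{Guard}_i\implies M_i\ge0$, $\mathit{Guard}_i\implies\mathbb{E}(M_{i+1}-M_i\mid\mathcal{F}_i)\le-\epsilon$, and $|M_{i+1}-M_i|<c$. Consequently $\mathcal{L}$ is not AST.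
   Context: A Prob-solvable loop $\mathcal{L}$ with real-valued variables $x_{(1)},\dots,x_{(m)}$ consists of an initialization $x_{(j)}:=r_{(j)}\in\mathbb{R}$, a guard $P>Q$ with $P,Q$ real polynomials, and a loop body that, for $j=1,\dots,m$ in order, sets $x_{(j)}$ to $a_{(jk)}x_{(j)}+P_{(jk)}$ with probability $p_{jk}$ ($k<l_j$) or to the last alternative with the remaining probability (independent choices), where $a_{(jk)}\ge0$, $P_{(jk)}\in\mathbb{R}[x_{(1)},\dots,x_{(j-1)}]$ evaluated at already-updated values, $p_{jk}\in[0,1]$, $\sum_k p_{jk}<1$. $G:=P-Q$. The loop space $(\Omega,\Sigma,(\mathcal{F}_i),\mathbb{P})$: $\Omega=(\mathbb{R}^m)^\omega$, $\mathcal{F}_i$ generated by cylinder sets of prefixes of length $i+1$; under $\mathbb{P}$ the first state is the initial state and each next state results from one execution of the body if the guard holds, otherwise it repeats the current state. $E_i(\vartheta):=E(\vartheta_i)$; $\mathit{Guard}_i$ is the event $G_i>0$; $T:=\inf\{i:G_i\le0\}$; $\mathcal{L}$ is AST if $\mathbb{P}(T<\infty)=1$. Branches: for a polynomial $H$, each choice vector $\kappa$ of alternatives gives a polynomial $B_\kappa$ with $H(s')=B_\kappa(s)$ when the body is executed from $s$ with these choices, with probability the product of the chosen alternatives' probabilities; the branches of $H$ are the polynomials $B$ whose total probability (summed over $\kappa$ with $B_\kappa=B$) is positive. An upper bounding function for an expression $E$ is a monotone $u:\mathbb{N}\to\mathbb{R}$, everywhere non-negative or everywhere non-positive, such that for some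 $\alpha>0$ and all sufficiently large $i$, $\mathbb{P}(E_i\le\alpha\,u(i)\mid T>i)=1$. An absolute bounding function for $E$ is an upper bounding function for $|E|$. *)

theory Defs
  imports "HOL-Probability.Probability" "HOL-Library.Stream"
begin

datatype mpoly = MConst real | MVar nat | MAdd mpoly mpoly | MMul mpoly mpoly

fun peval :: "mpoly \<Rightarrow> (nat \<Rightarrow> real) \<Rightarrow> real" where
  "peval (MConst c) s = c"
| "peval (MVar j) s = s j"
| "peval (MAdd p q) s = peval p s + peval q s"
| "peval (MMul p q) s = peval p s * peval q s"

fun pvars :: "mpoly \<Rightarrow> nat set" where
  "pvars (MConst c) = {}"
| "pvars (MVar j) = {j}"
| "pvars (MAdd p q) = pvars p \<union> pvars q"
| "pvars (MMul p q) = pvars p \<union> pvars q"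

text \<open>Variables are x_0,...,x_(m-1) (0-indexed).  Variable j has nalt j alternatives
  k = 0 .. nalt j - 1; alternative k sets x_j to coef j k * x_j + upd j k; alternatives
  k < nalt j - 1 have probability pr j k, the last one the remaining probability.
  The guard is gP > gQ.\<close>

record psloop =
  nvars :: nat
  init :: "nat \<Rightarrow> real"
  gP :: mpoly
  gQ :: mpoly
  nalt :: "nat \<Rightarrow> nat"
  coef :: "nat \<Rightarrow> nat \<Rightarrow> real"
  upd :: "nat \<Rightarrow> nat \<Rightarrow> mpoly"
  pr :: "nat \<Rightarrow> nat \<Rightarrow> real"

definition prob_solvable :: "psloop \<Rightarrow> bool" where
  "prob_solvable L \<longleftrightarrow>
     pvars (gP L) \<subseteq> {..<nvars L} \<and> pvars (gQ L) \<subseteq> {..<nvars L} \<and>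
     (\<forall>j<nvars L. 1 \<le> nalt L j \<and>
        (\<forall>k<nalt L j. 0 \<le> coef L j k \<and> pvars (upd L j k) \<subseteq> {..<j}) \<and>
        (\<forall>k<nalt L j - 1. 0 \<le> pr L j k \<and> pr L j k \<le> 1) \<and>
        (\<Sum>k<nalt L j - 1. pr L j k) < 1)"

definition guardG :: "psloop \<Rightarrow> (nat \<Rightarrow> real) \<Rightarrow> real" where
  "guardG L s = peval (gP L) s - peval (gQ L) s"

definition alt_prob :: "psloop \<Rightarrow> nat \<Rightarrow> nat \<Rightarrow> real" where
  "alt_prob L j k =
     (if k < nalt L j - 1 then pr L j k
      else if k = nalt L j - 1 then 1 - (\<Sum>k'<nalt L j - 1. pr L j k')
      else 0)"

definition alt_pmf :: "psloop \<Rightarrow> nat \<Rightarrow> nat pmf" where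
  "alt_pmf L j = embed_pmf (alt_prob L j)"

definition choice_pmf :: "psloop \<Rightarrow> (nat \<Rightarrow> nat) pmf" where
  "choice_pmf L = Pi_pmf {..<nvars L} 0 (alt_pmf L)"

fun body_upto :: "psloop \<Rightarrow> nat \<Rightarrow> (nat \<Rightarrow> real) \<Rightarrow> (nat \<Rightarrow> nat) \<Rightarrow> (nat \<Rightarrow> real)" where
  "body_upto L 0 s \<kappa> = s"
| "body_upto L (Suc j) s \<kappa> =
     (let s' = body_upto L j s \<kappa>
      in s'(j := coef L j (\<kappa> j) * s' j + peval (upd L j (\<kappa> j)) s'))"

definition body :: "psloop \<Rightarrow> (nat \<Rightarrow> real) \<Rightarrow> (nat \<Rightarrow> nat) \<Rightarrow> (nat \<Rightarrow> real)" where
  "body L s \<kappa> = body_upto L (nvars L) s \<kappa>"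

definition loop_step :: "psloop \<Rightarrow> (nat \<Rightarrow> real) \<Rightarrow> (nat \<Rightarrow> nat) \<Rightarrow> (nat \<Rightarrow> real)" where
  "loop_step L s \<kappa> = (if guardG L s > 0 then body L s \<kappa> else s)"

primrec run_state :: "psloop \<Rightarrow> (nat \<Rightarrow> nat) stream \<Rightarrow> nat \<Rightarrow> (nat \<Rightarrow> real)" where
  "run_state L ks 0 = (\<lambda>j. if j < nvars L then init L j else 0)"
| "run_state L ks (Suc i) = loop_step L (run_state L ks i) (ks !! i)"

definition run :: "psloop \<Rightarrow> (nat \<Rightarrow> nat) stream \<Rightarrow> (nat \<Rightarrow> real) stream" where
  "run L ks = smap (run_state L ks) (siterate Suc 0)"

definition loop_space :: "psloop \<Rightarrow> (nat \<Rightarrow> real) stream measure" where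
  "loop_space L = distr (stream_space (measure_pmf (choice_pmf L))) (stream_space borel) (run L)"

definition loop_filt :: "psloop \<Rightarrow> nat \<Rightarrow> (nat \<Rightarrow> real) stream measure" where
  "loop_filt L i = sigma (space (loop_space L))
     {(\<lambda>\<omega>. \<omega> !! k) -` A \<inter> space (loop_space L) | k A. k \<le> i \<and> A \<in> sets borel}"

definition stop_time :: "psloop \<Rightarrow> (nat \<Rightarrow> real) stream \<Rightarrow> enat" where
  "stop_time L \<omega> =
     (if \<exists>i. guardG L (\<omega> !! i) \<le> 0 then enat (LEAST i. guardG L (\<omega> !! i) \<le> 0) else \<infinity>)"

definition is_AST :: "psloop \<Rightarrow> bool" where
  "is_AST L \<longleftrightarrow>
     measure (loop_space L) {\<omega> \<in> space (loop_space L). stop_time L \<omega> < \<infinity>} = 1"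

definition cond_prob :: "'a measure \<Rightarrow> 'a set \<Rightarrow> 'a set \<Rightarrow> real" where
  "cond_prob M A B = measure M (A \<inter> B) / measure M B"

definition upper_bf ::
  "psloop \<Rightarrow> (nat \<Rightarrow> (nat \<Rightarrow> real) stream \<Rightarrow> real) \<Rightarrow> (nat \<Rightarrow> real) \<Rightarrow> bool" where
  "upper_bf L X u \<longleftrightarrow>
     (mono u \<or> antimono u) \<and> ((\<forall>i. 0 \<le> u i) \<or> (\<forall>i. u i \<le> 0)) \<and>
     (\<exists>\<alpha>>0. \<exists>n0. \<forall>i\<ge>n0.
        cond_prob (loop_space L)
          {\<omega> \<in> space (loop_space L). X i \<omega> \<le> \<alpha> * u i}
          {\<omega> \<in> space (loop_space L). enat i < stop_time L \<omega>} = 1)"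

definition abs_bf ::
  "psloop \<Rightarrow> (nat \<Rightarrow> (nat \<Rightarrow> real) stream \<Rightarrow> real) \<Rightarrow> (nat \<Rightarrow> real) \<Rightarrow> bool" where
  "abs_bf L X u \<longleftrightarrow> upper_bf L (\<lambda>i \<omega>. \<bar>X i \<omega>\<bar>) u"

text \<open>Branches of a polynomial H (represented by its polynomial function on states):
  the functions s \<mapsto> H(body s kappa), grouped by equality, of positive total probability.\<close>
definition branches :: "psloop \<Rightarrow> ((nat \<Rightarrow> real) \<Rightarrow> real) \<Rightarrow> ((nat \<Rightarrow> real) \<Rightarrow> real) set" where
  "branches L H =
     {B. measure_pmf.prob (choice_pmf L) {\<kappa>. (\<lambda>s. H (body L s \<kappa>)) = B} > 0}"

end

theory Submission
  imports Defs
begin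

declare snth.simps(2)[simp del]

lemma peval_cont: "continuous_on UNIV f \<Longrightarrow> continuous_on UNIV (\<lambda>s. peval p (f s :: nat \<Rightarrow> real))"
  for f :: "'a::topological_space \<Rightarrow> nat \<Rightarrow> real"
proof (induction p)
  case (MVar j) then show ?case
    by (simp add: continuous_on_product_then_coordinatewise)
qed (simp_all add: continuous_on_add continuous_on_mult)

lemma body_upto_cont: "continuous_on UNIV (\<lambda>s. body_upto L j s k)"
proof (induction j)
  case 0 show ?case by (simp add: continuous_on_id)
next
  case (Suc j)
  have c: "\<And>i. continuous_on UNIV (\<lambda>s. body_upto L j s k i)"
    using continuous_on_product_then_coordinatewise[OF Suc.IH] .
  have p: "continuous_on UNIV (\<lambda>s. peval (upd L j (k j)) (body_upto L j s k))"
    by (rule peval_cont[OF Suc.IH])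
  show ?case
    apply (simp add: Let_def)
    apply (rule continuous_on_coordinatewise_then_product)
    subgoal for i
      by (cases "i = j") (simp_all add: c continuous_on_add[OF continuous_on_mult[OF continuous_on_const c] p])
    done
qed

lemma guard_meas[measurable]: "guardG L \<in> borel_measurable borel"
  unfolding guardG_def
  by (intro borel_measurable_continuous_onI continuous_intros peval_cont[OF continuous_on_id, simplified])

lemma body_meas[measurable]: "(\<lambda>s. body L s k) \<in> measurable borel borel"
  unfolding body_def by (intro borel_measurable_continuous_onI body_upto_cont)

lemma step_meas[measurable]: "(\<lambda>s. loop_step L s k) \<in> measurable borel borel"
  unfolding loop_step_def by measurable

lemma coord_meas[measurable]: "(\<lambda>s::nat \<Rightarrow> real. s j) \<in> borel_measurable borel"
  by (intro borel_measurable_continuous_onI continuous_on_product_coordinates)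

definition rest :: "nat \<Rightarrow> (nat \<Rightarrow> nat) \<Rightarrow> (nat \<Rightarrow> nat)" where
  "rest m k = (\<lambda>j. if j < m then k j else 0)"

lemma body_upto_rest: "j \<le> m \<Longrightarrow> body_upto L j s (rest m k) = body_upto L j s k"
  by (induction j) (auto simp: rest_def Let_def)

lemma loop_step_rest: "loop_step L s (rest (nvars L) k) = loop_step L s k"
  by (simp add: loop_step_def body_def body_upto_rest)

lemma countable_rest: "countable (range (rest m))"
proof -
  have "range (rest m) \<subseteq> (\<lambda>xs j. if j < m then xs ! j else 0) ` (UNIV :: nat list set)"
  proof
    fix f assume "f \<in> range (rest m)"
    then obtain k where f: "f = rest m k" by auto
    have "f = (\<lambda>xs j. if j < m then xs ! j else 0) (map k [0..<m])"
      by (auto simp: f rest_def)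
    then show "f \<in> (\<lambda>xs j. if j < m then xs ! j else 0) ` (UNIV :: nat list set)"
      by blast
  qed
  moreover have "countable ((\<lambda>xs j. if j < m then xs ! j else 0) ` (UNIV :: nat list set))"
    by (intro countable_image) simp
  ultimately show ?thesis by (rule countable_subset)
qed

lemma run_snth[simp]: "run L ks !! n = run_state L ks n"
  by (simp add: run_def)

lemma run_state_meas: "(\<lambda>ks. run_state L ks n) \<in> measurable (stream_space (measure_pmf P)) borel"
proof (induction n)
  case 0 show ?case by simp
next
  case (Suc n)
  have e: "(\<lambda>ks. run_state L ks (Suc n)) =
     (\<lambda>ks. (\<lambda>k ks. loop_step L (run_state L ks n) k) (rest (nvars L) (ks !! n)) ks)"
    by (simp add: loop_step_rest)
  show ?case unfolding e
  proof (rule measurable_compose_countable'[where I="range (rest (nvars L))" and f="\<lambda>k ks. loop_step L (run_state L ks n) k" and g="\<lambda>ks. rest (nvars L) (ks !! n)"])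
    show "(\<lambda>ks. loop_step L (run_state L ks n) i) \<in> measurable (stream_space (measure_pmf P)) borel" for i
      using measurable_compose[OF Suc.IH step_meas[of L i]] by simp
    show "(\<lambda>x. rest (nvars L) (x !! n)) \<in> measurable (stream_space (measure_pmf P)) (count_space (range (rest (nvars L))))"
    proof -
      have "rest (nvars L) \<in> measurable (measure_pmf P) (count_space (range (rest (nvars L))))"
        by simp
      then show ?thesis by (rule measurable_compose[OF measurable_snth])
    qed
  qed (rule countable_rest)
qed

lemma run_meas: "run L \<in> measurable (stream_space (measure_pmf P)) (stream_space borel)"
  by (rule measurable_stream_space2) (simp add: run_state_meas)

lemma prob_loop: "prob_space (loop_space L)"
  unfolding loop_space_def
  by (rule prob_space.prob_space_distr[OF prob_space.prob_space_stream_space[OF prob_space_measure_pmf] run_meas])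

lemma sets_loop[simp, measurable_cong]: "sets (loop_space L) = sets (stream_space borel)"
  by (simp add: loop_space_def)

lemma space_loop[simp]: "space (loop_space L) = UNIV"
  by (simp add: loop_space_def space_stream_space)

definition Good :: "psloop \<Rightarrow> (nat \<Rightarrow> real) stream set" where
  "Good L = {\<omega>. \<forall>i. \<exists>k\<in>set_pmf (choice_pmf L). \<omega> !! Suc i = loop_step L (\<omega> !! i) k}"

lemma Good_sets: "Good L \<in> sets (stream_space borel)"
proof -
  have "Good L = {\<omega> \<in> space (stream_space borel). \<forall>i. \<exists>k\<in>set_pmf (choice_pmf L).
        \<forall>j. (\<omega> !! Suc i) j = loop_step L (\<omega> !! i) k j}"
    by (auto simp: Good_def space_stream_space fun_eq_iff)
  also have "\<dots> \<in> sets (stream_space borel)"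
    by measurable
  finally show ?thesis .
qed

lemma AE_Good: "AE \<omega> in loop_space L. \<omega> \<in> Good L"
proof -
  have "AE ks in stream_space (measure_pmf (choice_pmf L)). stream_all (\<lambda>x. x \<in> set_pmf (choice_pmf L)) ks"
    by (rule prob_space.AE_stream_all[OF prob_space_measure_pmf]) (simp_all add: AE_measure_pmf)
  then have "AE ks in stream_space (measure_pmf (choice_pmf L)). run L ks \<in> Good L"
    by eventually_elim (auto simp: Good_def stream_all_def)
  moreover have "{x \<in> space (stream_space borel). x \<in> Good L} \<in> sets (stream_space borel)"
    using Good_sets by (simp add: space_stream_space)
  ultimately show ?thesis unfolding loop_space_def
    by (subst AE_distr_iff[OF run_meas]) simp_all
qed

lemma Good_frozen: "\<omega> \<in> Good L \<Longrightarrow> \<not> guardG L (\<omega> !! i) > 0 \<Longrightarrow> \<omega> !! Suc i = \<omega> !! i"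
proof -
  assume g: "\<omega> \<in> Good L" and p: "\<not> guardG L (\<omega> !! i) > 0"
  from g obtain k where "\<omega> !! Suc i = loop_step L (\<omega> !! i) k"
    unfolding Good_def by blast
  then show ?thesis using p unfolding loop_step_def by simp
qed

lemma Good_frozen_n: "\<omega> \<in> Good L \<Longrightarrow> \<not> guardG L (\<omega> !! i) > 0 \<Longrightarrow> \<omega> !! (i + d) = \<omega> !! i"
proof (induction d)
  case (Suc d) then show ?case using Good_frozen[of \<omega> L "i+d"] by simp
qed simp

lemma Good_hist: "\<omega> \<in> Good L \<Longrightarrow> guardG L (\<omega> !! i) > 0 \<Longrightarrow> k \<le> i \<Longrightarrow> guardG L (\<omega> !! k) > 0"
  by (metis Good_frozen_n le_add_diff_inverse)

lemma Good_body: "\<omega> \<in> Good L \<Longrightarrow> guardG L (\<omega> !! i) > 0 \<Longrightarrow>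
    \<exists>k\<in>set_pmf (choice_pmf L). \<omega> !! Suc i = body L (\<omega> !! i) k"
proof -
  assume g: "\<omega> \<in> Good L" and p: "guardG L (\<omega> !! i) > 0"
  from g obtain k where "k \<in> set_pmf (choice_pmf L)" "\<omega> !! Suc i = loop_step L (\<omega> !! i) k"
    unfolding Good_def by blast
  then show ?thesis using p unfolding loop_step_def by auto
qed

lemma snth_meas_loop[measurable]: "(\<lambda>\<omega>. \<omega> !! k) \<in> measurable (loop_space L) borel"
  by measurable

lemma G_meas_loop[measurable]: "(\<lambda>\<omega>. guardG L (\<omega> !! k)) \<in> borel_measurable (loop_space L)"
  by measurable

lemma sets_filt: "sets (loop_filt L i) = sigma_sets UNIV
     {(\<lambda>\<omega>. \<omega> !! k) -` A \<inter> space (loop_space L) | k A. k \<le> i \<and> A \<in> sets borel}"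
  unfolding loop_filt_def by (subst sets_measure_of) auto

lemma space_filt[simp]: "space (loop_filt L i) = UNIV"
  unfolding loop_filt_def by (subst space_measure_of) auto

lemma subalg: "subalgebra (loop_space L) (loop_filt L i)"
  unfolding subalgebra_def
proof
  show "sets (loop_filt L i) \<subseteq> sets (loop_space L)"
    unfolding sets_filt
  proof (rule sets.sigma_sets_subset')
    show "{(\<lambda>\<omega>. \<omega> !! k) -` A \<inter> space (loop_space L) | k A. k \<le> i \<and> A \<in> sets borel} \<subseteq> sets (loop_space L)"
      using measurable_sets[OF snth_meas_loop] by blast
    show "UNIV \<in> sets (loop_space L)" using sets.top[of "loop_space L"] by simp
  qed
qed simp

lemma snth_meas_filt: "k \<le> i \<Longrightarrow> (\<lambda>\<omega>. \<omega> !! k) \<in> measurable (loop_filt L i) borel"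
  unfolding measurable_def sets_filt by (auto intro!: sigma_sets.Basic)

lemma G_meas_filt: "k \<le> i \<Longrightarrow> (\<lambda>\<omega>. guardG L (\<omega> !! k)) \<in> borel_measurable (loop_filt L i)"
  using measurable_compose[OF snth_meas_filt guard_meas] by simp

lemma fms: "finite_measure_subalgebra (loop_space L) (loop_filt L i)"
  unfolding finite_measure_subalgebra_def finite_measure_subalgebra_axioms_def
  using prob_loop subalg prob_space.finite_measure by blast

lemma stop_gt: "enat i < stop_time L \<omega> \<longleftrightarrow> (\<forall>k\<le>i. guardG L (\<omega> !! k) > 0)"
proof (cases "\<exists>i. guardG L (\<omega> !! i) \<le> 0")
  case True
  define l where "l = (LEAST i. guardG L (\<omega> !! i) \<le> 0)"
  have l: "guardG L (\<omega> !! l) \<le> 0" unfolding l_def using True by (metis LeastI)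
  have nl: "k < l \<Longrightarrow> guardG L (\<omega> !! k) > 0" for k unfolding l_def
    using not_less_Least by (metis not_le)
  have "stop_time L \<omega> = enat l" using True by (simp add: stop_time_def l_def)
  then show ?thesis using l nl by (auto simp: not_le)
next
  case False
  then have "stop_time L \<omega> = \<infinity>" by (simp add: stop_time_def)
  with False show ?thesis by (auto simp: not_le)
qed

lemma stop_fin: "stop_time L \<omega> < \<infinity> \<longleftrightarrow> (\<exists>i. guardG L (\<omega> !! i) \<le> 0)"
  by (simp add: stop_time_def)

lemma alt_nonneg: "prob_solvable L \<Longrightarrow> j < nvars L \<Longrightarrow> 0 \<le> alt_prob L j x"
proof -
  assume ps: "prob_solvable L" and j: "j < nvars L"
  have "1 \<le> nalt L j" "(\<Sum>k<nalt L j - 1. pr L j k) < 1" "\<forall>k<nalt L j - 1. 0 \<le> pr L j k"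
    using ps j unfolding prob_solvable_def by auto
  then show ?thesis unfolding alt_prob_def by auto
qed

lemma alt_sum: "prob_solvable L \<Longrightarrow> j < nvars L \<Longrightarrow> (\<integral>\<^sup>+x. alt_prob L j x \<partial>count_space UNIV) = 1"
proof -
  assume ps: "prob_solvable L" and j: "j < nvars L"
  define n where "n = nalt L j"
  have n1: "1 \<le> n" using ps j unfolding prob_solvable_def n_def by auto
  have s1: "(\<Sum>x\<in>{..<n}. alt_prob L j x) = 1"
  proof -
    have "{..<n} = insert (n - 1) {..<n-1}" using n1 by auto
    then have "(\<Sum>x\<in>{..<n}. alt_prob L j x) = alt_prob L j (n - 1) + (\<Sum>x\<in>{..<n-1}. alt_prob L j x)"
      by simp
    also have "(\<Sum>x\<in>{..<n-1}. alt_prob L j x) = (\<Sum>x\<in>{..<n-1}. pr L j x)"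
      using n1 by (intro sum.cong) (auto simp: alt_prob_def n_def)
    finally show ?thesis using n1 by (simp add: alt_prob_def n_def)
  qed
  have "(\<integral>\<^sup>+x. alt_prob L j x \<partial>count_space UNIV) = (\<Sum>x\<in>{..<n}. ennreal (alt_prob L j x))"
    using n1 by (intro nn_integral_count_space') (auto simp: alt_prob_def n_def)
  also have "\<dots> = ennreal (\<Sum>x\<in>{..<n}. alt_prob L j x)"
    using alt_nonneg[OF ps j] by (intro sum_ennreal)
  also have "\<dots> = 1" using s1 by simp
  finally show ?thesis .
qed

lemma set_alt: "prob_solvable L \<Longrightarrow> j < nvars L \<Longrightarrow> set_pmf (alt_pmf L j) \<subseteq> {..<nalt L j}"
proof -
  assume ps: "prob_solvable L" and j: "j < nvars L"
  have n1: "1 \<le> nalt L j" using ps j unfolding prob_solvable_def by auto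
  have "set_pmf (alt_pmf L j) = {x. alt_prob L j x \<noteq> 0}"
    unfolding alt_pmf_def by (rule set_embed_pmf[OF alt_nonneg[OF ps j] alt_sum[OF ps j]])
  also have "\<dots> \<subseteq> {..<nalt L j}"
  proof
    fix x assume "x \<in> {x. alt_prob L j x \<noteq> 0}"
    then show "x \<in> {..<nalt L j}" using n1 unfolding alt_prob_def
      by (cases "x < nalt L j - 1"; cases "x = nalt L j - 1") auto
  qed
  finally show ?thesis .
qed

lemma finite_K: "prob_solvable L \<Longrightarrow> finite (set_pmf (choice_pmf L))"
proof -
  assume ps: "prob_solvable L"
  have "set_pmf (choice_pmf L) = PiE_dflt {..<nvars L} 0 (set_pmf \<circ> alt_pmf L)"
    unfolding choice_pmf_def by (rule set_Pi_pmf) simp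
  also have "finite \<dots>"
  proof (rule finite_PiE_dflt)
    fix x assume "x \<in> {..<nvars L}"
    then show "finite ((set_pmf \<circ> alt_pmf L) x)"
      using finite_subset[OF set_alt[OF ps] finite_lessThan] by simp
  qed simp
  finally show ?thesis .
qed

lemma branch_in: "k \<in> set_pmf (choice_pmf L) \<Longrightarrow>
   (\<lambda>s. - guardG L (body L s k)) \<in> branches L (\<lambda>s. - guardG L s)"
proof -
  assume k: "k \<in> set_pmf (choice_pmf L)"
  have "0 < pmf (choice_pmf L) k" using k by (simp add: pmf_positive)
  also have "pmf (choice_pmf L) k = measure_pmf.prob (choice_pmf L) {k}" by (simp add: measure_pmf_single)
  also have "\<dots> \<le> measure_pmf.prob (choice_pmf L) {k'. (\<lambda>s. - guardG L (body L s k')) = (\<lambda>s. - guardG L (body L s k))}"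
    by (rule measure_pmf.finite_measure_mono) simp_all
  finally have P: "0 < measure_pmf.prob (choice_pmf L) {k'. (\<lambda>s. - guardG L (body L s k')) = (\<lambda>s. - guardG L (body L s k))}" .
  show ?thesis unfolding branches_def using P by (simp only: mem_Collect_eq)
qed


lemma cond_prob_AE:
  assumes M: "prob_space M" and A: "A \<in> sets M" and B: "B \<in> sets M" and c: "cond_prob M A B = 1"
  shows "AE x in M. x \<in> B \<longrightarrow> x \<in> A"
proof -
  interpret prob_space M by (rule M)
  have nz: "measure M B \<noteq> 0" using c by (auto simp: cond_prob_def)
  then have eq: "measure M (A \<inter> B) = measure M B" using c by (auto simp: cond_prob_def field_simps)
  have "measure M (B - A) = measure M B - measure M (B \<inter> A)"
    by (rule finite_measure_Diff'[OF B A])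
  also have "\<dots> = 0" using eq by (simp add: Int_commute)
  finally have "emeasure M (B - A) = 0" using A B by (simp add: emeasure_eq_measure)
  then have "B - A \<in> null_sets M" using A B by auto
  from AE_not_in[OF this] show ?thesis by eventually_elim auto
qed

lemma exp_quad:
  fixes x :: real
  assumes h: "\<bar>x\<bar> \<le> 1"
  shows "exp x \<le> 1 + x + x^2"
proof (cases "x \<ge> 0")
  case True then show ?thesis using exp_bound[of x] h by auto
next
  case False
  have e: "1 - x \<le> exp (-x)" using exp_ge_add_one_self[of "-x"] by simp
  have pos: "0 < 1 - x" using False by simp
  have "exp x = inverse (exp (-x))" by (simp add: exp_minus)
  also have "\<dots> \<le> inverse (1 - x)" using e pos by (intro le_imp_inverse_le) auto
  also have "\<dots> \<le> 1 + x + x^2"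
  proof -
    have c: "(1 - x) * (1 + x + x^2) = 1 - x^3"
      by (simp add: algebra_simps power2_eq_square power3_eq_cube)
    have "x * x \<ge> 0" by simp
    then have "x^3 \<le> 0" using False by (simp add: power3_eq_cube mult_nonneg_nonpos)
    then have "1 \<le> (1 - x) * (1 + x + x^2)" using c by simp
    then show ?thesis using pos by (simp add: field_simps)
  qed
  finally show ?thesis .
qed

lemma step_ineq:
  fixes a b lam cc :: real
  assumes lp: "lam > 0" and l1: "lam * cc \<le> 1" and a: "a > 0" and d: "\<bar>- b + a\<bar> < cc"
  shows "(if b > 0 then exp (- lam * b) else 1)
     \<le> exp (- lam * a) + lam * (exp (- lam * a) * (- b + a)) + lam^2 * cc^2 * exp (- lam * a)"
proof -
  define d where "d = - b + a"
  have "(if b > 0 then exp (- lam * b) else 1) \<le> exp (- lam * b)"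
    using lp mult_nonneg_nonpos[of lam b] by (auto simp: not_less)
  also have "exp (- lam * b) = exp (- lam * a) * exp (lam * d)"
    by (simp add: d_def exp_add[symmetric] algebra_simps)
  also have "exp (lam * d) \<le> 1 + lam * d + (lam * d)^2"
  proof (rule exp_quad)
    have "\<bar>lam * d\<bar> = lam * \<bar>d\<bar>" using lp by (simp add: abs_mult)
    also have "\<dots> \<le> lam * cc" using d lp by (simp add: d_def)
    finally show "\<bar>lam * d\<bar> \<le> 1" using l1 by simp
  qed
  also have "(lam * d)^2 \<le> lam^2 * cc^2"
  proof -
    have "\<bar>d\<bar>^2 \<le> cc^2" using d by (intro power_mono) (auto simp: d_def)
    then show ?thesis by (simp add: power_mult_distrib mult_left_mono)
  qed
  finally have "(if b > 0 then exp (- lam * b) else 1) \<le> exp (- lam * a) * (1 + lam * d + lam^2 * cc^2)"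
    by (simp add: mult_left_mono)
  then show ?thesis by (simp add: d_def algebra_simps)
qed

lemma nonAST:
  fixes L :: psloop and \<epsilon> cc :: real and i0 :: nat
  assumes ep: "\<epsilon> > 0" and ccp: "cc > 0"
    and gp: "measure (loop_space L) {\<omega> \<in> space (loop_space L). guardG L (\<omega> !! i0) > 0} > 0"
    and drift: "\<And>i. i \<ge> i0 \<Longrightarrow> AE \<omega> in loop_space L. guardG L (\<omega> !! i) > 0 \<longrightarrow>
        real_cond_exp (loop_space L) (loop_filt L i)
          (\<lambda>\<omega>. - guardG L (\<omega> !! Suc i) + guardG L (\<omega> !! i)) \<omega> \<le> - \<epsilon>"
    and bound: "\<And>i. i \<ge> i0 \<Longrightarrow> AE \<omega> in loop_space L.
        \<bar>- guardG L (\<omega> !! Suc i) + guardG L (\<omega> !! i)\<bar> < cc"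
  shows "\<not> is_AST L"
proof
  assume ast: "is_AST L"
  interpret P: prob_space "loop_space L" by (rule prob_loop)
  define D where "D = (\<lambda>i \<omega>. - guardG L (\<omega> !! Suc i) + guardG L (\<omega> !! i))"
  define lam where "lam = min (1 / cc) (\<epsilon> / cc^2)"
  have lp: "lam > 0" using ep ccp by (simp add: lam_def)
  have l1: "lam * cc \<le> 1"
  proof -
    have "lam * cc \<le> (1 / cc) * cc" using ccp by (intro mult_right_mono) (auto simp: lam_def)
    then show ?thesis using ccp by simp
  qed
  have l2: "lam * cc^2 \<le> \<epsilon>"
  proof -
    have "lam * cc^2 \<le> (\<epsilon> / cc^2) * cc^2" using ccp by (intro mult_right_mono) (auto simp: lam_def)
    then show ?thesis using ccp by simp
  qed
  define Y where "Y = (\<lambda>i \<omega>. if guardG L (\<omega> !! i) > 0 then exp (- lam * guardG L (\<omega> !! i)) else 1)"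
  define g where "g = (\<lambda>i \<omega>. if guardG L (\<omega> !! i) > 0 then exp (- lam * guardG L (\<omega> !! i)) else 0)"
  have Dm[measurable]: "D i \<in> borel_measurable (loop_space L)" for i unfolding D_def by measurable
  have Ym[measurable]: "Y i \<in> borel_measurable (loop_space L)" for i unfolding Y_def by measurable
  have gm[measurable]: "g i \<in> borel_measurable (loop_space L)" for i unfolding g_def by measurable
  have gmF: "g i \<in> borel_measurable (loop_filt L i)" for i
  proof -
    have [measurable]: "(\<lambda>\<omega>. guardG L (\<omega> !! i)) \<in> borel_measurable (loop_filt L i)"
      by (rule G_meas_filt) simp
    show ?thesis unfolding g_def by measurable
  qed
  have exple: "guardG L (\<omega> !! i) > 0 \<Longrightarrow> exp (- lam * guardG L (\<omega> !! i)) \<le> 1" for \<omega> i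
    using lp by (simp add: mult_pos_pos)
  have Yb: "0 \<le> Y i \<omega> \<and> Y i \<omega> \<le> 1" for i \<omega> using exple[of \<omega> i] by (simp add: Y_def)
  have gb: "0 \<le> g i \<omega> \<and> g i \<omega> \<le> 1" for i \<omega> using exple[of \<omega> i] by (simp add: g_def)
  have Yi: "integrable (loop_space L) (Y i)" for i
    by (rule P.integrable_const_bound[where B=1]) (use Yb in auto)
  have gi: "integrable (loop_space L) (g i)" for i
    by (rule P.integrable_const_bound[where B=1]) (use gb in auto)
  have gDi: "integrable (loop_space L) (\<lambda>\<omega>. g i \<omega> * D i \<omega>)" if "i \<ge> i0" for i
  proof (rule P.integrable_const_bound[where B=cc])
    show "AE \<omega> in loop_space L. norm (g i \<omega> * D i \<omega>) \<le> cc"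
      using bound[OF that]
    proof eventually_elim
      case (elim \<omega>)
      have "\<bar>g i \<omega> * D i \<omega>\<bar> = \<bar>g i \<omega>\<bar> * \<bar>D i \<omega>\<bar>" by (simp add: abs_mult)
      also have "\<dots> \<le> 1 * cc" using gb[of i \<omega>] elim
        by (intro mult_mono) (auto simp: D_def)
      finally show ?case by simp
    qed
  qed simp
  have mono_step: "(\<integral>\<omega>. Y (Suc n) \<omega> \<partial>loop_space L) \<le> (\<integral>\<omega>. Y n \<omega> \<partial>loop_space L)" if n: "n \<ge> i0" for n
  proof -
    interpret S: finite_measure_subalgebra "loop_space L" "loop_filt L n" by (rule fms)
    define E where "E = real_cond_exp (loop_space L) (loop_filt L n) (D n)"
    have gE: "integrable (loop_space L) (\<lambda>\<omega>. g n \<omega> * E \<omega>)"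
      "(\<integral>\<omega>. g n \<omega> * E \<omega> \<partial>loop_space L) = (\<integral>\<omega>. g n \<omega> * D n \<omega> \<partial>loop_space L)"
      unfolding E_def by (rule S.real_cond_exp_intg[OF gDi[OF n] gmF Dm])+
    have "AE \<omega> in loop_space L. g n \<omega> * E \<omega> \<le> - \<epsilon> * g n \<omega>"
      using drift[OF n]
    proof eventually_elim
      case (elim \<omega>)
      show ?case
      proof (cases "guardG L (\<omega> !! n) > 0")
        case True
        then have "E \<omega> \<le> - \<epsilon>" using elim by (simp add: E_def D_def)
        then have "g n \<omega> * E \<omega> \<le> g n \<omega> * (- \<epsilon>)" using gb[of n \<omega>] by (intro mult_left_mono) auto
        then show ?thesis by (simp add: mult.commute)
      qed (simp add: g_def)
    qed
    then have I1: "(\<integral>\<omega>. g n \<omega> * D n \<omega> \<partial>loop_space L) \<le> - \<epsilon> * (\<integral>\<omega>. g n \<omega> \<partial>loop_space L)"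
      unfolding gE(2)[symmetric]
      by (subst integral_mult_right_zero[symmetric]) (rule integral_mono_AE[OF gE(1)], use gi in auto)
    have ptw: "AE \<omega> in loop_space L. Y (Suc n) \<omega> \<le> Y n \<omega> + lam * (g n \<omega> * D n \<omega>) + lam^2 * cc^2 * g n \<omega>"
      using AE_Good[of L] bound[OF n]
    proof eventually_elim
      case (elim \<omega>)
      show ?case
      proof (cases "guardG L (\<omega> !! n) > 0")
        case True
        then show ?thesis using step_ineq[OF lp l1 True elim(2)]
          by (simp add: Y_def g_def D_def)
      next
        case False
        then have "\<omega> !! Suc n = \<omega> !! n" using Good_frozen elim(1) by blast
        then show ?thesis using False by (simp add: Y_def g_def)
      qed
    qed
    have "(\<integral>\<omega>. Y (Suc n) \<omega> \<partial>loop_space L) \<le>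
        (\<integral>\<omega>. Y n \<omega> + lam * (g n \<omega> * D n \<omega>) + lam^2 * cc^2 * g n \<omega> \<partial>loop_space L)"
      by (rule integral_mono_AE[OF Yi _ ptw]) (use Yi[of n] gi[of n] gDi[OF n] in simp)
    also have "\<dots> = (\<integral>\<omega>. Y n \<omega> \<partial>loop_space L) + lam * (\<integral>\<omega>. g n \<omega> * D n \<omega> \<partial>loop_space L)
        + lam^2 * cc^2 * (\<integral>\<omega>. g n \<omega> \<partial>loop_space L)"
      using Yi gi gDi[OF n] by simp
    also have "\<dots> \<le> (\<integral>\<omega>. Y n \<omega> \<partial>loop_space L)"
    proof -
      define I where "I = (\<integral>\<omega>. g n \<omega> \<partial>loop_space L)"
      have I0: "I \<ge> 0" unfolding I_def using gb by (intro integral_nonneg_AE) auto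
      have "lam * (\<integral>\<omega>. g n \<omega> * D n \<omega> \<partial>loop_space L) \<le> lam * (- \<epsilon> * I)"
        using I1 lp by (intro mult_left_mono) (auto simp: I_def)
      moreover have "lam * (- \<epsilon> * I) + lam^2 * cc^2 * I \<le> 0"
      proof -
        have "lam * (- \<epsilon> * I) + lam^2 * cc^2 * I = (lam * I) * (lam * cc^2 - \<epsilon>)"
          by (simp add: algebra_simps power2_eq_square)
        also have "\<dots> \<le> 0" using lp I0 l2 by (intro mult_nonneg_nonpos) auto
        finally show ?thesis .
      qed
      ultimately show ?thesis by (simp add: I_def)
    qed
    finally show ?thesis .
  qed
  have dec: "(\<integral>\<omega>. Y n \<omega> \<partial>loop_space L) \<le> (\<integral>\<omega>. Y i0 \<omega> \<partial>loop_space L)" if "n \<ge> i0" for n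
    using that
  proof (induction n rule: dec_induct)
    case (step n) then show ?case using mono_step[OF step(1)] by linarith
  qed simp
  define a where "a = (\<integral>\<omega>. Y i0 \<omega> \<partial>loop_space L)"
  have alt1: "a < 1"
  proof (rule ccontr)
    assume "\<not> a < 1"
    then have a1: "a \<ge> 1" by simp
    have int1: "integrable (loop_space L) (\<lambda>\<omega>. 1 - Y i0 \<omega>)" using Yi by simp
    have "(\<integral>\<omega>. 1 - Y i0 \<omega> \<partial>loop_space L) = 1 - a"
      using Yi using P.prob_space by (simp add: a_def)
    also have "\<dots> \<le> 0" using a1 by simp
    finally have "(\<integral>\<omega>. 1 - Y i0 \<omega> \<partial>loop_space L) \<le> 0" .
    moreover have "(\<integral>\<omega>. 1 - Y i0 \<omega> \<partial>loop_space L) \<ge> 0" using Yb by (intro integral_nonneg_AE) auto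
    ultimately have "(\<integral>\<omega>. 1 - Y i0 \<omega> \<partial>loop_space L) = 0" by simp
    then have "AE \<omega> in loop_space L. 1 - Y i0 \<omega> = 0"
      using integral_nonneg_eq_0_iff_AE[OF int1] Yb by auto
    then have "AE \<omega> in loop_space L. \<omega> \<in> {\<omega> \<in> space (loop_space L). guardG L (\<omega> !! i0) > 0} \<longleftrightarrow> \<omega> \<in> {}"
    proof eventually_elim
      case (elim \<omega>)
      show ?case
      proof (cases "guardG L (\<omega> !! i0) > 0")
        case True
        then have "exp (- lam * guardG L (\<omega> !! i0)) < 1" using lp by (simp add: mult_pos_pos)
        then show ?thesis using elim True by (simp add: Y_def)
      qed simp
    qed
    moreover have "{\<omega> \<in> space (loop_space L). guardG L (\<omega> !! i0) > 0} \<in> sets (loop_space L)"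
      by measurable
    ultimately have "measure (loop_space L) {\<omega> \<in> space (loop_space L). guardG L (\<omega> !! i0) > 0} = measure (loop_space L) {}"
      using measure_eq_AE sets.empty_sets by blast
    then show False using gp by simp
  qed
  define S where "S = (\<lambda>n. {\<omega> \<in> space (loop_space L). \<exists>k\<le>n. guardG L (\<omega> !! k) \<le> 0})"
  have Sn: "S n \<in> sets (loop_space L)" for n unfolding S_def by measurable
  have Ssets: "range S \<subseteq> sets (loop_space L)" using Sn by auto
  have Sinc: "incseq S" unfolding incseq_def S_def by (auto intro: le_trans)
  have Sle: "measure (loop_space L) (S n) \<le> a" if n: "n \<ge> i0" for n
  proof -
    have "measure (loop_space L) (S n) = measure (loop_space L) {\<omega> \<in> space (loop_space L). guardG L (\<omega> !! n) \<le> 0}"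
    proof (rule measure_eq_AE)
      show "AE \<omega> in loop_space L. (\<omega> \<in> S n) = (\<omega> \<in> {\<omega> \<in> space (loop_space L). guardG L (\<omega> !! n) \<le> 0})"
        using AE_Good[of L]
      proof eventually_elim
        case (elim \<omega>)
        show ?case using Good_hist[OF elim] by (auto simp: S_def not_le) (meson not_le)
      qed
      show "S n \<in> sets (loop_space L)" using Ssets by auto
    qed measurable
    also have "\<dots> = (\<integral>\<omega>. indicator {\<omega> \<in> space (loop_space L). guardG L (\<omega> !! n) \<le> 0} \<omega> \<partial>loop_space L)"
      by simp
    also have "\<dots> \<le> (\<integral>\<omega>. Y n \<omega> \<partial>loop_space L)"
    proof (rule integral_mono[OF _ Yi])
      have [measurable]: "{\<omega> \<in> space (loop_space L). guardG L (\<omega> !! n) \<le> 0} \<in> sets (loop_space L)"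
        by measurable
      show "integrable (loop_space L) (indicat_real {\<omega> \<in> space (loop_space L). guardG L (\<omega> !! n) \<le> 0})"
        by (rule P.integrable_const_bound[where B=1]) (auto split: split_indicator)
      show "indicat_real {\<omega> \<in> space (loop_space L). guardG L (\<omega> !! n) \<le> 0} \<omega> \<le> Y n \<omega>"
        if "\<omega> \<in> space (loop_space L)" for \<omega>
        using Yb[of n \<omega>] by (auto simp: Y_def split: split_indicator)
    qed
    also have "\<dots> \<le> a" unfolding a_def by (rule dec[OF n])
    finally show ?thesis .
  qed
  have "(\<lambda>n. measure (loop_space L) (S n)) \<longlonglongrightarrow> measure (loop_space L) (\<Union>n. S n)"
    by (rule P.finite_Lim_measure_incseq[OF Ssets Sinc])
  then have "measure (loop_space L) (\<Union>n. S n) \<le> a"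
    by (rule LIMSEQ_le_const2) (use Sle in auto)
  moreover have "(\<Union>n. S n) = {\<omega> \<in> space (loop_space L). stop_time L \<omega> < \<infinity>}"
  proof (intro equalityI subsetI)
    fix \<omega> assume "\<omega> \<in> (\<Union>n. S n)"
    then obtain k where "guardG L (\<omega> !! k) \<le> 0" by (auto simp: S_def)
    then have "stop_time L \<omega> < \<infinity>" using stop_fin[of L \<omega>] by blast
    then show "\<omega> \<in> {\<omega> \<in> space (loop_space L). stop_time L \<omega> < \<infinity>}" by simp
  next
    fix \<omega> assume "\<omega> \<in> {\<omega> \<in> space (loop_space L). stop_time L \<omega> < \<infinity>}"
    then have "stop_time L \<omega> < \<infinity>" by simp
    then obtain k where "guardG L (\<omega> !! k) \<le> 0" using stop_fin[of L \<omega>] by blast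
    then have "\<omega> \<in> S k" by (auto simp: S_def)
    then show "\<omega> \<in> (\<Union>n. S n)" by blast
  qed
  ultimately have "measure (loop_space L) {\<omega> \<in> space (loop_space L). stop_time L \<omega> < \<infinity>} < 1"
    using alt1 by simp
  then show False using ast by (simp add: is_AST_def)
qed


theorem mainTheorem6:
  fixes L :: psloop and u :: "nat \<Rightarrow> real"
    and c :: "((nat \<Rightarrow> real) \<Rightarrow> real) \<Rightarrow> nat \<Rightarrow> real"
    and \<kappa> C :: real and i1 i2 :: nat
  assumes ps: "prob_solvable L"
    and ub: "upper_bf L
              (\<lambda>i. real_cond_exp (loop_space L) (loop_filt L i)
                     (\<lambda>\<omega>. - guardG L (\<omega> !! Suc i) + guardG L (\<omega> !! i))) u"
    and \<kappa>pos: "\<kappa> > 0" and ubneg: "\<forall>i\<ge>i1. u i \<le> - \<kappa>"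
    and guardpos: "\<forall>i. measure (loop_space L)
                      {\<omega> \<in> space (loop_space L). guardG L (\<omega> !! i) > 0} > 0"
    and cb: "\<forall>B \<in> branches L (\<lambda>s. - guardG L s).
               abs_bf L (\<lambda>i \<omega>. B (\<omega> !! i) + guardG L (\<omega> !! i)) (c B)"
    and cbC: "\<forall>B \<in> branches L (\<lambda>s. - guardG L s). \<forall>i\<ge>i2. c B i \<le> C"
  shows "(\<exists>i0 \<epsilon> cc. \<epsilon> > 0 \<and> cc > 0 \<and>
            measure (loop_space L)
              {\<omega> \<in> space (loop_space L). - guardG L (\<omega> !! i0) < 0} > 0 \<and>
            (\<forall>i\<ge>i0. AE \<omega> in loop_space L.
               (\<not> guardG L (\<omega> !! i) > 0 \<longrightarrow> - guardG L (\<omega> !! i) \<ge> 0) \<and>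
               (guardG L (\<omega> !! i) > 0 \<longrightarrow>
                  real_cond_exp (loop_space L) (loop_filt L i)
                    (\<lambda>\<omega>'. (- guardG L (\<omega>' !! Suc i)) - (- guardG L (\<omega>' !! i))) \<omega> \<le> - \<epsilon>) \<and>
               \<bar>(- guardG L (\<omega> !! Suc i)) - (- guardG L (\<omega> !! i))\<bar> < cc))
         \<and> \<not> is_AST L"
proof -
  interpret P: prob_space "loop_space L" by (rule prob_loop)
  define K where "K = set_pmf (choice_pmf L)"
  have finK: "finite K" using finite_K[OF ps] by (simp add: K_def)
  have neK: "K \<noteq> {}" by (simp add: K_def set_pmf_not_empty)
  define D where "D = (\<lambda>i \<omega>. - guardG L (\<omega> !! Suc i) + guardG L (\<omega> !! i))"
  define E where "E = (\<lambda>i. real_cond_exp (loop_space L) (loop_filt L i) (D i))"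
  have Em[measurable]: "E i \<in> borel_measurable (loop_space L)" for i
    unfolding E_def by (rule borel_measurable_cond_exp2)
  have Tset: "{\<omega> \<in> space (loop_space L). enat i < stop_time L \<omega>} =
      {\<omega> \<in> space (loop_space L). \<forall>k\<le>i. guardG L (\<omega> !! k) > 0}" for i
    by (simp add: stop_gt)
  have Tsets: "{\<omega> \<in> space (loop_space L). enat i < stop_time L \<omega>} \<in> sets (loop_space L)" for i
    unfolding Tset by measurable
  have Tgood: "\<omega> \<in> Good L \<Longrightarrow> guardG L (\<omega> !! i) > 0 \<Longrightarrow>
      \<omega> \<in> {\<omega> \<in> space (loop_space L). enat i < stop_time L \<omega>}" for \<omega> i
    using Good_hist[of \<omega> L i] by (simp add: stop_gt)
  obtain \<alpha> n0 where apos: "\<alpha> > 0" and hd: "\<forall>i\<ge>n0. cond_prob (loop_space L)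
      {\<omega> \<in> space (loop_space L). E i \<omega> \<le> \<alpha> * u i}
      {\<omega> \<in> space (loop_space L). enat i < stop_time L \<omega>} = 1"
    using ub unfolding upper_bf_def E_def D_def by blast
  define \<epsilon> where "\<epsilon> = \<alpha> * \<kappa>"
  have epos: "\<epsilon> > 0" using apos \<kappa>pos by (simp add: \<epsilon>_def)
  have drift: "AE \<omega> in loop_space L. guardG L (\<omega> !! i) > 0 \<longrightarrow> E i \<omega> \<le> - \<epsilon>"
    if i: "i \<ge> max n0 i1" for i
  proof -
    have A: "{\<omega> \<in> space (loop_space L). E i \<omega> \<le> \<alpha> * u i} \<in> sets (loop_space L)" by measurable
    have "AE \<omega> in loop_space L. \<omega> \<in> {\<omega> \<in> space (loop_space L). enat i < stop_time L \<omega>} \<longrightarrow>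
        \<omega> \<in> {\<omega> \<in> space (loop_space L). E i \<omega> \<le> \<alpha> * u i}"
      by (rule cond_prob_AE[OF prob_loop A Tsets]) (use hd i in auto)
    with AE_Good[of L] show ?thesis
    proof eventually_elim
      case (elim \<omega>)
      show ?case
      proof
        assume g: "guardG L (\<omega> !! i) > 0"
        then have "E i \<omega> \<le> \<alpha> * u i" using elim Tgood by blast
        also have "\<alpha> * u i \<le> \<alpha> * (- \<kappa>)" using ubneg i apos by (intro mult_left_mono) auto
        finally show "E i \<omega> \<le> - \<epsilon>" by (simp add: \<epsilon>_def)
      qed
    qed
  qed
  define Bk where "Bk = (\<lambda>k s. - guardG L (body L s k))"
  have "\<forall>k\<in>K. \<exists>a>0. \<exists>n. \<forall>i\<ge>n. cond_prob (loop_space L)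
      {\<omega> \<in> space (loop_space L). \<bar>Bk k (\<omega> !! i) + guardG L (\<omega> !! i)\<bar> \<le> a * c (Bk k) i}
      {\<omega> \<in> space (loop_space L). enat i < stop_time L \<omega>} = 1"
  proof
    fix k assume k: "k \<in> K"
    have "Bk k \<in> branches L (\<lambda>s. - guardG L s)" using branch_in[of k L] k by (simp add: K_def Bk_def)
    then have "abs_bf L (\<lambda>i \<omega>. Bk k (\<omega> !! i) + guardG L (\<omega> !! i)) (c (Bk k))" using cb by blast
    then show "\<exists>a>0. \<exists>n. \<forall>i\<ge>n. cond_prob (loop_space L)
      {\<omega> \<in> space (loop_space L). \<bar>Bk k (\<omega> !! i) + guardG L (\<omega> !! i)\<bar> \<le> a * c (Bk k) i}
      {\<omega> \<in> space (loop_space L). enat i < stop_time L \<omega>} = 1"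
      unfolding abs_bf_def upper_bf_def by blast
  qed
  from bchoice[OF this] obtain a where ha: "\<forall>k\<in>K. a k > 0 \<and> (\<exists>n. \<forall>i\<ge>n. cond_prob (loop_space L)
      {\<omega> \<in> space (loop_space L). \<bar>Bk k (\<omega> !! i) + guardG L (\<omega> !! i)\<bar> \<le> a k * c (Bk k) i}
      {\<omega> \<in> space (loop_space L). enat i < stop_time L \<omega>} = 1)"
    by blast
  then have apos2: "\<And>k. k \<in> K \<Longrightarrow> a k > 0" by blast
  from ha have "\<forall>k\<in>K. \<exists>n. \<forall>i\<ge>n. cond_prob (loop_space L)
      {\<omega> \<in> space (loop_space L). \<bar>Bk k (\<omega> !! i) + guardG L (\<omega> !! i)\<bar> \<le> a k * c (Bk k) i}
      {\<omega> \<in> space (loop_space L). enat i < stop_time L \<omega>} = 1" by blast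
  from bchoice[OF this] obtain nn where hb0: "\<forall>k\<in>K. \<forall>i\<ge>nn k. cond_prob (loop_space L)
      {\<omega> \<in> space (loop_space L). \<bar>Bk k (\<omega> !! i) + guardG L (\<omega> !! i)\<bar> \<le> a k * c (Bk k) i}
      {\<omega> \<in> space (loop_space L). enat i < stop_time L \<omega>} = 1" by blast
  have hb: "\<And>k i. k \<in> K \<Longrightarrow> i \<ge> nn k \<Longrightarrow>
      cond_prob (loop_space L)
      {\<omega> \<in> space (loop_space L). \<bar>Bk k (\<omega> !! i) + guardG L (\<omega> !! i)\<bar> \<le> a k * c (Bk k) i}
      {\<omega> \<in> space (loop_space L). enat i < stop_time L \<omega>} = 1" using hb0 by blast
  define N1 where "N1 = Max (nn ` K)"
  define A where "A = Max (a ` K)"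
  have nnle: "k \<in> K \<Longrightarrow> nn k \<le> N1" for k unfolding N1_def using finK by simp
  have ale: "k \<in> K \<Longrightarrow> a k \<le> A" for k unfolding A_def using finK by simp
  have Apos: "A > 0" using neK apos2 ale by (meson all_not_in_conv less_le_trans)
  define cc where "cc = A * \<bar>C\<bar> + 1"
  have ccpos: "cc > 0" proof - have "0 \<le> A * \<bar>C\<bar>" using Apos by simp then show ?thesis by (simp add: cc_def) qed
  have bound: "AE \<omega> in loop_space L. \<bar>D i \<omega>\<bar> < cc" if i: "i \<ge> max N1 i2" for i
  proof -
    have "AE \<omega> in loop_space L. \<forall>k\<in>K. \<omega> \<in> {\<omega> \<in> space (loop_space L). enat i < stop_time L \<omega>} \<longrightarrow>
        \<omega> \<in> {\<omega> \<in> space (loop_space L). \<bar>Bk k (\<omega> !! i) + guardG L (\<omega> !! i)\<bar> \<le> a k * c (Bk k) i}"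
    proof (rule AE_finite_allI[OF finK])
      fix k assume k: "k \<in> K"
      have A: "{\<omega> \<in> space (loop_space L). \<bar>Bk k (\<omega> !! i) + guardG L (\<omega> !! i)\<bar> \<le> a k * c (Bk k) i}
          \<in> sets (loop_space L)" unfolding Bk_def by measurable
      show "AE \<omega> in loop_space L. \<omega> \<in> {\<omega> \<in> space (loop_space L). enat i < stop_time L \<omega>} \<longrightarrow>
        \<omega> \<in> {\<omega> \<in> space (loop_space L). \<bar>Bk k (\<omega> !! i) + guardG L (\<omega> !! i)\<bar> \<le> a k * c (Bk k) i}"
        by (rule cond_prob_AE[OF prob_loop A Tsets]) (use hb k i nnle[OF k] in auto)
    qed
    with AE_Good[of L] show ?thesis
    proof eventually_elim
      case (elim \<omega>)
      show ?case
      proof (cases "guardG L (\<omega> !! i) > 0")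
        case True
        obtain k where k: "k \<in> K" and st: "\<omega> !! Suc i = body L (\<omega> !! i) k"
          using Good_body[OF elim(1) True] by (auto simp: K_def)
        have "D i \<omega> = Bk k (\<omega> !! i) + guardG L (\<omega> !! i)" by (simp add: D_def Bk_def st)
        also have "\<bar>\<dots>\<bar> \<le> a k * c (Bk k) i" using elim(2) k Tgood[OF elim(1) True] by blast
        also have "\<dots> \<le> a k * C"
        proof -
          have "Bk k \<in> branches L (\<lambda>s. - guardG L s)" using branch_in[of k L] k by (simp add: K_def Bk_def)
          then have "c (Bk k) i \<le> C" using cbC i by auto
          then show ?thesis using apos2[OF k] by (intro mult_left_mono) auto
        qed
        also have "\<dots> \<le> a k * \<bar>C\<bar>" using apos2[OF k] by (intro mult_left_mono) auto
        also have "\<dots> \<le> A * \<bar>C\<bar>" using ale[OF k] by (intro mult_right_mono) auto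
        also have "\<dots> < cc" by (simp add: cc_def)
        finally show ?thesis .
      next
        case False
        then have "\<omega> !! Suc i = \<omega> !! i" using Good_frozen elim(1) by blast
        then show ?thesis using ccpos by (simp add: D_def)
      qed
    qed
  qed
  define i0 where "i0 = max (max n0 i1) (max N1 i2)"
  have gp: "measure (loop_space L) {\<omega> \<in> space (loop_space L). guardG L (\<omega> !! i0) > 0} > 0"
    using guardpos by blast
  have drift0: "AE \<omega> in loop_space L. guardG L (\<omega> !! i) > 0 \<longrightarrow>
        real_cond_exp (loop_space L) (loop_filt L i)
          (\<lambda>\<omega>. - guardG L (\<omega> !! Suc i) + guardG L (\<omega> !! i)) \<omega> \<le> - \<epsilon>" if "i \<ge> i0" for i
    using drift[of i] that unfolding E_def D_def i0_def by auto
  have bound0: "AE \<omega> in loop_space L. \<bar>- guardG L (\<omega> !! Suc i) + guardG L (\<omega> !! i)\<bar> < cc"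
    if "i \<ge> i0" for i
    using bound[of i] that unfolding D_def i0_def by auto
  have part1: "\<exists>i0 \<epsilon> cc. \<epsilon> > 0 \<and> cc > 0 \<and>
            measure (loop_space L)
              {\<omega> \<in> space (loop_space L). - guardG L (\<omega> !! i0) < 0} > 0 \<and>
            (\<forall>i\<ge>i0. AE \<omega> in loop_space L.
               (\<not> guardG L (\<omega> !! i) > 0 \<longrightarrow> - guardG L (\<omega> !! i) \<ge> 0) \<and>
               (guardG L (\<omega> !! i) > 0 \<longrightarrow>
                  real_cond_exp (loop_space L) (loop_filt L i)
                    (\<lambda>\<omega>'. (- guardG L (\<omega>' !! Suc i)) - (- guardG L (\<omega>' !! i))) \<omega> \<le> - \<epsilon>) \<and>
               \<bar>(- guardG L (\<omega> !! Suc i)) - (- guardG L (\<omega> !! i))\<bar> < cc)"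
  proof (intro exI conjI allI impI)
    show "\<epsilon> > 0" by (rule epos)
    show "cc > 0" by (rule ccpos)
    show "measure (loop_space L) {\<omega> \<in> space (loop_space L). - guardG L (\<omega> !! i0) < 0} > 0"
      using gp by simp
    fix i assume i: "i \<ge> i0"
    have eqf: "(\<lambda>\<omega>'. (- guardG L (\<omega>' !! Suc i)) - (- guardG L (\<omega>' !! i))) =
        (\<lambda>\<omega>. - guardG L (\<omega> !! Suc i) + guardG L (\<omega> !! i))" by (rule ext) simp
    show "AE \<omega> in loop_space L.
               (\<not> guardG L (\<omega> !! i) > 0 \<longrightarrow> - guardG L (\<omega> !! i) \<ge> 0) \<and>
               (guardG L (\<omega> !! i) > 0 \<longrightarrow>
                  real_cond_exp (loop_space L) (loop_filt L i)
                    (\<lambda>\<omega>'. (- guardG L (\<omega>' !! Suc i)) - (- guardG L (\<omega>' !! i))) \<omega> \<le> - \<epsilon>) \<and>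
               \<bar>(- guardG L (\<omega> !! Suc i)) - (- guardG L (\<omega> !! i))\<bar> < cc"
      unfolding eqf using drift0[OF i] bound0[OF i] by eventually_elim auto
  qed
  have part2: "\<not> is_AST L"
    by (rule nonAST[OF epos ccpos gp drift0 bound0])
  show ?thesis using part1 part2 by blast
qed


end
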